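(* Let $R$ be a left PBW ring with respect to $\preceq$, and let $G=\{\mathbf g_1,\dots,\mathbf g_t\}\subseteq R^m$ be a Gröbner basis of $R\mathbf g_1+\dots+R\mathbf g_t$ consisting of elements with leading coefficient $1$. Let $I=\{(i,j):1\le i<j\le t,\ \operatorname{level}(\mathbf g_i)=\operatorname{level}(\mathbf g_j)\}$ and, for each $(i,j)\in I$, choose $h_{ijk}\in R$ with $SP(\mathbf g_i,\mathbf g_j)=\sum_{k=1}^t h_{ijk}\mathbf g_k$ and $\max_\preceq\{\exp(h_{ijk})+\exp(\mathbf g_k)\}=\exp(SP(\mathbf g_i,\mathbf g_j))$. Put $\mathbf s_{ij}=r_{ij}\mathbf e'_i-r_{ji}\mathbf e'_j-\sum_k h_{ijk}\mathbf e'_k\in R^t$, where $\mathbf e'_1,\dots,\mathbf e'_t$ is the canonical basis of $R^t$. Then $\{\mathbf s_{ij}:(i,j)\in I\}$ is a Gröbner basis of $\operatorname{Syz}(G)=\{(a_1,\dots,a_t)\in R^t:\sum a_i\mathbf g_i=0\}$ with respect to the ordering $\preceq_G$ on $\mathbb N^n\times\{1,\dots,t\}$; in particular it generates $\operatorname{Syz}(G)$.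
   Context: $R$ contains a skew field $\mathbb D$ and $x_1,\dots,x_n$ with monomials $\mathbf x^\alpha$ a left $\mathbb D$-basis; $\preceq$ admissible on $\mathbb N^n$; left PBW: $\exp(fg)=\exp f+\exp g$. $q_{\alpha,\beta}\ne0$ is the coefficient of $\mathbf x^{\alpha+\beta}$ in $\mathbf x^\alpha\mathbf x^\beta$. In a free module $R^m$ with basis $\mathbf e_i$, $\mathbf f=\sum c_{(\alpha,i)}\mathbf x^\alpha\mathbf e_i$, $\mathcal N(\mathbf f)$ its support, exponents ordered by TOP ($(\alpha,i)\preceq(\beta,j)$ iff $\alpha\prec\beta$ or ($\alpha=\beta$, $i\le j$)), $\exp(\mathbf f)=\max\mathcal N(\mathbf f)=(\operatorname{sexp}\mathbf f,\operatorname{level}\mathbf f)$, leading coefficient $c_{\exp\mathbf f}$; $\mathbb N^n$ acts by $(\alpha,i)+\beta=(\alpha+\beta,i)$. A Gröbner basis of a submodule $L$ (w.r.t. a given admissible order on exponents) is a finite $G\subseteq L$ with $\{\exp\mathbf f:0\ne\mathbf f\in L\}=\bigcup(\exp\mathbf g_i+\mathbb N^n)$. With $\alpha_i=\operatorname{sexp}\mathbf g_i$ and $\vee$ componentwise max: $r_{ij}=q^{-1}_{\alpha_i\vee\alpha_j-\alpha_i,\alpha_i}\mathbf x^{\alpha_i\vee\alpha_j-\alpha_i}$, $SP(\mathbf g_i,\mathbf g_j)=r_{ij}\mathbf g_i-r_{ji}\mathbf g_j$. The order $\preceq_G$ on $\mathbb N^n\times\{1,\dots,t\}$: $(\alpha,i)\preceq_G(\beta,j)$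 iff $\alpha+\exp\mathbf g_i\prec\beta+\exp\mathbf g_j$ (in TOP), or $\alpha+\exp\mathbf g_i=\beta+\exp\mathbf g_j$ and $j\le i$; exponents of elements of $R^t$ are computed with $\preceq_G$ for this statement. *)

theory Defs
  imports Main
begin

definition Exps :: "nat \<Rightarrow> (nat \<Rightarrow> nat) set" where
  "Exps n = {\<alpha>. \<forall>i\<ge>n. \<alpha> i = 0}"

definition addE :: "(nat \<Rightarrow> nat) \<Rightarrow> (nat \<Rightarrow> nat) \<Rightarrow> (nat \<Rightarrow> nat)" where
  "addE \<alpha> \<beta> = (\<lambda>i. \<alpha> i + \<beta> i)"

definition subE :: "(nat \<Rightarrow> nat) \<Rightarrow> (nat \<Rightarrow> nat) \<Rightarrow> (nat \<Rightarrow> nat)" where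
  "subE \<alpha> \<beta> = (\<lambda>i. \<alpha> i - \<beta> i)"

definition supE :: "(nat \<Rightarrow> nat) \<Rightarrow> (nat \<Rightarrow> nat) \<Rightarrow> (nat \<Rightarrow> nat)" where
  "supE \<alpha> \<beta> = (\<lambda>i. max (\<alpha> i) (\<beta> i))"

definition zeroE :: "nat \<Rightarrow> nat" where "zeroE = (\<lambda>_. 0)"

definition admissible :: "nat \<Rightarrow> ((nat \<Rightarrow> nat) \<Rightarrow> (nat \<Rightarrow> nat) \<Rightarrow> bool) \<Rightarrow> bool" where
  "admissible n le \<longleftrightarrow>
     (\<forall>\<alpha>\<in>Exps n. le \<alpha> \<alpha>) \<and>
     (\<forall>\<alpha>\<in>Exps n. \<forall>\<beta>\<in>Exps n. \<forall>\<gamma>\<in>Exps n. le \<alpha> \<beta> \<longrightarrow> le \<beta> \<gamma> \<longrightarrow> le \<alpha> \<gamma>) \<and>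
     (\<forall>\<alpha>\<in>Exps n. \<forall>\<beta>\<in>Exps n. le \<alpha> \<beta> \<longrightarrow> le \<beta> \<alpha> \<longrightarrow> \<alpha> = \<beta>) \<and>
     (\<forall>\<alpha>\<in>Exps n. \<forall>\<beta>\<in>Exps n. le \<alpha> \<beta> \<or> le \<beta> \<alpha>) \<and>
     (\<forall>\<alpha>\<in>Exps n. le zeroE \<alpha>) \<and>
     (\<forall>\<alpha>\<in>Exps n. \<forall>\<beta>\<in>Exps n. \<forall>\<gamma>\<in>Exps n. le \<alpha> \<beta> \<longrightarrow> le (addE \<alpha> \<gamma>) (addE \<beta> \<gamma>))"

definition maxby :: "('a \<Rightarrow> 'a \<Rightarrow> bool) \<Rightarrow> 'a set \<Rightarrow> 'a" where
  "maxby le S = (THE m. m \<in> S \<and> (\<forall>s\<in>S. le s m))"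

definition skew_field :: "'r::ring_1 set \<Rightarrow> bool" where
  "skew_field D \<longleftrightarrow> (0::'r) \<in> D \<and> 1 \<in> D \<and> (1::'r) \<noteq> 0 \<and>
     (\<forall>a\<in>D. \<forall>b\<in>D. a + b \<in> D \<and> a * b \<in> D \<and> - a \<in> D) \<and>
     (\<forall>a\<in>D. a \<noteq> 0 \<longrightarrow> (\<exists>b\<in>D. a * b = 1 \<and> b * a = 1))"

definition dinv :: "'r::ring_1 set \<Rightarrow> 'r \<Rightarrow> 'r" where
  "dinv D a = (THE b. b \<in> D \<and> a * b = 1 \<and> b * a = 1)"

definition mono :: "(nat \<Rightarrow> 'r::ring_1) \<Rightarrow> nat \<Rightarrow> (nat \<Rightarrow> nat) \<Rightarrow> 'r" where
  "mono x n \<alpha> = foldr (\<lambda>i acc. x i ^ \<alpha> i * acc) [0..<n] 1"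

definition is_repr :: "'r::ring_1 set \<Rightarrow> (nat \<Rightarrow> 'r) \<Rightarrow> nat \<Rightarrow> 'r \<Rightarrow> ((nat \<Rightarrow> nat) \<Rightarrow> 'r) \<Rightarrow> bool" where
  "is_repr D x n f c \<longleftrightarrow> (\<forall>\<alpha>. c \<alpha> \<in> D) \<and> (\<forall>\<alpha>. \<alpha> \<notin> Exps n \<longrightarrow> c \<alpha> = 0) \<and>
     finite {\<alpha>. c \<alpha> \<noteq> 0} \<and> f = (\<Sum>\<alpha>\<in>{\<alpha>. c \<alpha> \<noteq> 0}. c \<alpha> * mono x n \<alpha>)"

text \<open>Coefficient of x^alpha in f (w.r.t. the left D-basis of monomials).\<close>
definition coef :: "'r::ring_1 set \<Rightarrow> (nat \<Rightarrow> 'r) \<Rightarrow> nat \<Rightarrow> 'r \<Rightarrow> (nat \<Rightarrow> nat) \<Rightarrow> 'r" where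
  "coef D x n f = (THE c. is_repr D x n f c)"

definition supp :: "'r::ring_1 set \<Rightarrow> (nat \<Rightarrow> 'r) \<Rightarrow> nat \<Rightarrow> 'r \<Rightarrow> (nat \<Rightarrow> nat) set" where
  "supp D x n f = {\<alpha>. coef D x n f \<alpha> \<noteq> 0}"

definition rexp :: "'r::ring_1 set \<Rightarrow> (nat \<Rightarrow> 'r) \<Rightarrow> nat \<Rightarrow> ((nat \<Rightarrow> nat) \<Rightarrow> (nat \<Rightarrow> nat) \<Rightarrow> bool)
    \<Rightarrow> 'r \<Rightarrow> (nat \<Rightarrow> nat)" where
  "rexp D x n le f = maxby le (supp D x n f)"

definition left_PBW :: "'r::ring_1 set \<Rightarrow> (nat \<Rightarrow> 'r) \<Rightarrow> nat \<Rightarrow> ((nat \<Rightarrow> nat) \<Rightarrow> (nat \<Rightarrow> nat) \<Rightarrow> bool) \<Rightarrow> bool" where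
  "left_PBW D x n le \<longleftrightarrow> skew_field D \<and> admissible n le \<and>
     (\<forall>f. \<exists>!c. is_repr D x n f c) \<and>
     (\<forall>f g. f \<noteq> 0 \<longrightarrow> g \<noteq> 0 \<longrightarrow>
        f * g \<noteq> 0 \<and> rexp D x n le (f * g) = addE (rexp D x n le f) (rexp D x n le g))"

definition qc :: "'r::ring_1 set \<Rightarrow> (nat \<Rightarrow> 'r) \<Rightarrow> nat \<Rightarrow> (nat \<Rightarrow> nat) \<Rightarrow> (nat \<Rightarrow> nat) \<Rightarrow> 'r" where
  "qc D x n \<alpha> \<beta> = coef D x n (mono x n \<alpha> * mono x n \<beta>) (addE \<alpha> \<beta>)"

definition vecs :: "nat \<Rightarrow> (nat \<Rightarrow> 'r::ring_1) set" where
  "vecs k = {f. \<forall>l. l \<notin> {1..k} \<longrightarrow> f l = 0}"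

definition vsupp :: "'r::ring_1 set \<Rightarrow> (nat \<Rightarrow> 'r) \<Rightarrow> nat \<Rightarrow> nat \<Rightarrow> (nat \<Rightarrow> 'r)
    \<Rightarrow> ((nat \<Rightarrow> nat) \<times> nat) set" where
  "vsupp D x n k f = {(\<alpha>, i). i \<in> {1..k} \<and> coef D x n (f i) \<alpha> \<noteq> 0}"

definition vexp :: "'r::ring_1 set \<Rightarrow> (nat \<Rightarrow> 'r) \<Rightarrow> nat \<Rightarrow> nat
    \<Rightarrow> ((nat \<Rightarrow> nat) \<times> nat \<Rightarrow> (nat \<Rightarrow> nat) \<times> nat \<Rightarrow> bool) \<Rightarrow> (nat \<Rightarrow> 'r) \<Rightarrow> (nat \<Rightarrow> nat) \<times> nat" where
  "vexp D x n k ord f = maxby ord (vsupp D x n k f)"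

definition lcoef :: "'r::ring_1 set \<Rightarrow> (nat \<Rightarrow> 'r) \<Rightarrow> nat \<Rightarrow> nat
    \<Rightarrow> ((nat \<Rightarrow> nat) \<times> nat \<Rightarrow> (nat \<Rightarrow> nat) \<times> nat \<Rightarrow> bool) \<Rightarrow> (nat \<Rightarrow> 'r) \<Rightarrow> 'r" where
  "lcoef D x n k ord f = coef D x n (f (snd (vexp D x n k ord f))) (fst (vexp D x n k ord f))"

definition addP :: "(nat \<Rightarrow> nat) \<times> nat \<Rightarrow> (nat \<Rightarrow> nat) \<Rightarrow> (nat \<Rightarrow> nat) \<times> nat" where
  "addP p \<beta> = (addE (fst p) \<beta>, snd p)"

definition TOP :: "((nat \<Rightarrow> nat) \<Rightarrow> (nat \<Rightarrow> nat) \<Rightarrow> bool)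
    \<Rightarrow> (nat \<Rightarrow> nat) \<times> nat \<Rightarrow> (nat \<Rightarrow> nat) \<times> nat \<Rightarrow> bool" where
  "TOP le p q \<longleftrightarrow> (le (fst p) (fst q) \<and> fst p \<noteq> fst q) \<or> (fst p = fst q \<and> snd p \<le> snd q)"

definition is_GB :: "'r::ring_1 set \<Rightarrow> (nat \<Rightarrow> 'r) \<Rightarrow> nat \<Rightarrow> nat
    \<Rightarrow> ((nat \<Rightarrow> nat) \<times> nat \<Rightarrow> (nat \<Rightarrow> nat) \<times> nat \<Rightarrow> bool)
    \<Rightarrow> (nat \<Rightarrow> 'r) set \<Rightarrow> (nat \<Rightarrow> 'r) set \<Rightarrow> bool" where
  "is_GB D x n k ord G L \<longleftrightarrow> finite G \<and> G \<subseteq> L \<and> (\<lambda>_. 0) \<notin> G \<and>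
     {vexp D x n k ord f | f. f \<in> L \<and> f \<noteq> (\<lambda>_. 0)}
       = (\<Union>g\<in>G. {addP (vexp D x n k ord g) \<beta> | \<beta>. \<beta> \<in> Exps n})"

definition submod :: "nat \<Rightarrow> (nat \<Rightarrow> nat \<Rightarrow> 'r::ring_1) \<Rightarrow> (nat \<Rightarrow> 'r) set" where
  "submod t g = {(\<lambda>l. \<Sum>i\<in>{1..t}. a i * g i l) | a. True}"

definition Syz :: "nat \<Rightarrow> (nat \<Rightarrow> nat \<Rightarrow> 'r::ring_1) \<Rightarrow> (nat \<Rightarrow> 'r) set" where
  "Syz t g = {a. a \<in> vecs t \<and> (\<lambda>l. \<Sum>i\<in>{1..t}. a i * g i l) = (\<lambda>_. 0)}"

definition rcoef :: "'r::ring_1 set \<Rightarrow> (nat \<Rightarrow> 'r) \<Rightarrow> nat \<Rightarrow> ((nat \<Rightarrow> nat) \<Rightarrow> (nat \<Rightarrow> nat) \<Rightarrow> bool)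
    \<Rightarrow> nat \<Rightarrow> (nat \<Rightarrow> nat \<Rightarrow> 'r) \<Rightarrow> nat \<Rightarrow> nat \<Rightarrow> 'r" where
  "rcoef D x n le m g i j =
     (let ai = fst (vexp D x n m (TOP le) (g i));
          aj = fst (vexp D x n m (TOP le) (g j));
          d = subE (supE ai aj) ai
      in dinv D (qc D x n d ai) * mono x n d)"

definition SP :: "'r::ring_1 set \<Rightarrow> (nat \<Rightarrow> 'r) \<Rightarrow> nat \<Rightarrow> ((nat \<Rightarrow> nat) \<Rightarrow> (nat \<Rightarrow> nat) \<Rightarrow> bool)
    \<Rightarrow> nat \<Rightarrow> (nat \<Rightarrow> nat \<Rightarrow> 'r) \<Rightarrow> nat \<Rightarrow> nat \<Rightarrow> (nat \<Rightarrow> 'r)" where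
  "SP D x n le m g i j =
     (\<lambda>l. rcoef D x n le m g i j * g i l - rcoef D x n le m g j i * g j l)"

definition ordG :: "'r::ring_1 set \<Rightarrow> (nat \<Rightarrow> 'r) \<Rightarrow> nat \<Rightarrow> ((nat \<Rightarrow> nat) \<Rightarrow> (nat \<Rightarrow> nat) \<Rightarrow> bool)
    \<Rightarrow> nat \<Rightarrow> (nat \<Rightarrow> nat \<Rightarrow> 'r)
    \<Rightarrow> (nat \<Rightarrow> nat) \<times> nat \<Rightarrow> (nat \<Rightarrow> nat) \<times> nat \<Rightarrow> bool" where
  "ordG D x n le m g p q \<longleftrightarrow>
     (let P = addP (vexp D x n m (TOP le) (g (snd p))) (fst p);
          Q = addP (vexp D x n m (TOP le) (g (snd q))) (fst q)
      in (TOP le P Q \<and> P \<noteq> Q) \<or> (P = Q \<and> snd q \<le> snd p))"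

definition Ipairs :: "'r::ring_1 set \<Rightarrow> (nat \<Rightarrow> 'r) \<Rightarrow> nat \<Rightarrow> ((nat \<Rightarrow> nat) \<Rightarrow> (nat \<Rightarrow> nat) \<Rightarrow> bool)
    \<Rightarrow> nat \<Rightarrow> nat \<Rightarrow> (nat \<Rightarrow> nat \<Rightarrow> 'r) \<Rightarrow> (nat \<times> nat) set" where
  "Ipairs D x n le m t g = {(i, j). 1 \<le> i \<and> i < j \<and> j \<le> t \<and>
      snd (vexp D x n m (TOP le) (g i)) = snd (vexp D x n m (TOP le) (g j))}"

definition syzvec :: "'r::ring_1 set \<Rightarrow> (nat \<Rightarrow> 'r) \<Rightarrow> nat \<Rightarrow> ((nat \<Rightarrow> nat) \<Rightarrow> (nat \<Rightarrow> nat) \<Rightarrow> bool)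
    \<Rightarrow> nat \<Rightarrow> nat \<Rightarrow> (nat \<Rightarrow> nat \<Rightarrow> 'r) \<Rightarrow> (nat \<Rightarrow> nat \<Rightarrow> nat \<Rightarrow> 'r) \<Rightarrow> nat \<Rightarrow> nat \<Rightarrow> (nat \<Rightarrow> 'r)" where
  "syzvec D x n le m t g h i j =
     (\<lambda>k. (if k = i then rcoef D x n le m g i j else 0)
        - (if k = j then rcoef D x n le m g j i else 0)
        - (if k \<in> {1..t} then h i j k else 0))"

end

theory Submission
  imports Defs
begin

lemma maxby_eq:
  assumes "p \<in> S" "\<forall>s\<in>S. ord s p" "\<forall>a\<in>S. \<forall>b\<in>S. ord a b \<longrightarrow> ord b a \<longrightarrow> a = b"
  shows "maxby ord S = p"
  unfolding maxby_def
  by (rule the_equality) (use assms in blast)+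

lemma maxby_ex:
  assumes "finite S" "S \<noteq> {}"
    and tr: "\<forall>a\<in>S. \<forall>b\<in>S. \<forall>c\<in>S. ord a b \<longrightarrow> ord b c \<longrightarrow> ord a c"
    and tot: "\<forall>a\<in>S. \<forall>b\<in>S. ord a b \<or> ord b a"
  shows "\<exists>p\<in>S. \<forall>s\<in>S. ord s p"
  using assms(1,2,3,4)
proof (induction S rule: finite_ne_induct)
  case (singleton x)
  then show ?case by auto
next
  case (insert a F)
  have trF: "\<forall>a\<in>F. \<forall>b\<in>F. \<forall>c\<in>F. ord a b \<longrightarrow> ord b c \<longrightarrow> ord a c"
    using insert.prems(1) by blast
  have totF: "\<forall>a\<in>F. \<forall>b\<in>F. ord a b \<or> ord b a"
    using insert.prems(2) by blast
  obtain p where p: "p \<in> F" "\<forall>s\<in>F. ord s p" using insert.IH[OF trF totF] by blast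
  show ?case
  proof (cases "ord a p")
    case True then show ?thesis using p by auto
  next
    case False
    then have "ord p a" using insert.prems(2) p(1) by blast
    have "\<forall>s\<in>F. ord s a" using insert.prems(1) p \<open>ord p a\<close> by blast
    then show ?thesis using \<open>ord p a\<close> insert.prems(2) by blast
  qed
qed

lemma addE_commute: "addE a b = addE b a" by (auto simp: addE_def)
lemma addE_assoc: "addE (addE a b) c = addE a (addE b c)" by (auto simp: addE_def)
lemma addE_zero[simp]: "addE zeroE a = a" "addE a zeroE = a" by (auto simp: addE_def zeroE_def)
lemma addE_cancel: "addE a b = addE a c \<Longrightarrow> b = c"
  by (auto simp: addE_def fun_eq_iff)
lemma addE_cancel2: "addE b a = addE c a \<Longrightarrow> b = c"
  by (auto simp: addE_def fun_eq_iff)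
lemma Exps_addE[simp]: "a \<in> Exps n \<Longrightarrow> b \<in> Exps n \<Longrightarrow> addE a b \<in> Exps n"
  by (auto simp: Exps_def addE_def)
lemma Exps_subE[simp]: "a \<in> Exps n \<Longrightarrow> subE a b \<in> Exps n"
  by (auto simp: Exps_def subE_def)
lemma Exps_supE[simp]: "a \<in> Exps n \<Longrightarrow> b \<in> Exps n \<Longrightarrow> supE a b \<in> Exps n"
  by (auto simp: Exps_def supE_def)
lemma Exps_zeroE[simp]: "zeroE \<in> Exps n" by (auto simp: Exps_def zeroE_def)

lemma mono_zeroE: "mono x n zeroE = 1"
proof -
  have "foldr (\<lambda>i acc. x i ^ zeroE i * acc) xs 1 = 1" for xs
    by (induction xs) (auto simp: zeroE_def)
  then show ?thesis by (simp add: mono_def)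
qed

locale pbw =
  fixes D :: "'r::ring_1 set" and x :: "nat \<Rightarrow> 'r" and n :: nat
    and le :: "(nat \<Rightarrow> nat) \<Rightarrow> (nat \<Rightarrow> nat) \<Rightarrow> bool"
  assumes PBW: "left_PBW D x n le"
begin

lemma sf: "skew_field D" using PBW by (simp add: left_PBW_def)
lemma adm: "admissible n le" using PBW by (simp add: left_PBW_def)
lemma uniq: "\<exists>!c. is_repr D x n f c" using PBW by (simp add: left_PBW_def)
lemma PBW4: "\<forall>f g. f \<noteq> 0 \<longrightarrow> g \<noteq> 0 \<longrightarrow>
        f * g \<noteq> 0 \<and> rexp D x n le (f * g) = addE (rexp D x n le f) (rexp D x n le g)"
  using PBW unfolding left_PBW_def by (rule conjunct2[OF conjunct2[OF conjunct2]])
lemma prod_nz: "(f::'r) \<noteq> 0 \<Longrightarrow> g \<noteq> 0 \<Longrightarrow> f * g \<noteq> 0"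
  using PBW4 by meson
lemma prod_rexp: "f \<noteq> 0 \<Longrightarrow> g \<noteq> 0 \<Longrightarrow> rexp D x n le (f * g) = addE (rexp D x n le f) (rexp D x n le g)"
  using PBW4 by meson

lemma D0: "0 \<in> D" and D1: "1 \<in> D" and one_nz: "(1::'r) \<noteq> 0"
  using sf by (auto simp: skew_field_def)
lemma Dadd: "a \<in> D \<Longrightarrow> b \<in> D \<Longrightarrow> a + b \<in> D"
  and Dmult: "a \<in> D \<Longrightarrow> b \<in> D \<Longrightarrow> a * b \<in> D"
  and Dneg: "a \<in> D \<Longrightarrow> - a \<in> D"
  using sf by (auto simp: skew_field_def)
lemma Dinv: "a \<in> D \<Longrightarrow> a \<noteq> 0 \<Longrightarrow> \<exists>b\<in>D. a * b = 1 \<and> b * a = 1"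
  using sf by (auto simp: skew_field_def)

lemma dinv: assumes "a \<in> D" "a \<noteq> 0"
  shows "dinv D a \<in> D" "a * dinv D a = 1" "dinv D a * a = 1"
proof -
  obtain b where b: "b \<in> D" "a * b = 1" "b * a = 1" using Dinv assms by blast
  have u: "\<And>c. c \<in> D \<and> a * c = 1 \<and> c * a = 1 \<Longrightarrow> c = b"
  proof -
    fix c assume "c \<in> D \<and> a * c = 1 \<and> c * a = 1"
    then have "c = c * (a * b)" using b by simp
    also have "\<dots> = (c * a) * b" by (simp add: mult.assoc)
    also have "\<dots> = b" using \<open>c \<in> D \<and> a * c = 1 \<and> c * a = 1\<close> by simp
    finally show "c = b" .
  qed
  have "dinv D a = b" unfolding dinv_def
  proof (rule the_equality)
    show "b \<in> D \<and> a * b = 1 \<and> b * a = 1" using b by simp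
  next
    fix c assume "c \<in> D \<and> a * c = 1 \<and> c * a = 1" then show "c = b" by (rule u)
  qed
  then show "dinv D a \<in> D" "a * dinv D a = 1" "dinv D a * a = 1" using b by auto
qed

lemma le_refl: "a \<in> Exps n \<Longrightarrow> le a a" using adm by (simp add: admissible_def)
lemma le_trans: "a \<in> Exps n \<Longrightarrow> b \<in> Exps n \<Longrightarrow> c \<in> Exps n \<Longrightarrow> le a b \<Longrightarrow> le b c \<Longrightarrow> le a c"
  using adm unfolding admissible_def by blast
lemma le_antisym: "a \<in> Exps n \<Longrightarrow> b \<in> Exps n \<Longrightarrow> le a b \<Longrightarrow> le b a \<Longrightarrow> a = b"
  using adm unfolding admissible_def by blast
lemma le_total: "a \<in> Exps n \<Longrightarrow> b \<in> Exps n \<Longrightarrow> le a b \<or> le b a"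
  using adm unfolding admissible_def by blast
lemma le_zero: "a \<in> Exps n \<Longrightarrow> le zeroE a"
  using adm unfolding admissible_def by blast
lemma le_add: "a \<in> Exps n \<Longrightarrow> b \<in> Exps n \<Longrightarrow> c \<in> Exps n \<Longrightarrow> le a b \<Longrightarrow> le (addE a c) (addE b c)"
  using adm unfolding admissible_def by blast
lemma le_addl: "a \<in> Exps n \<Longrightarrow> b \<in> Exps n \<Longrightarrow> c \<in> Exps n \<Longrightarrow> le a b \<Longrightarrow> le (addE c a) (addE c b)"
  using le_add by (metis addE_commute)
lemma le_cancel: assumes "a \<in> Exps n" "b \<in> Exps n" "c \<in> Exps n" "le (addE c a) (addE c b)"
  shows "le a b"
proof (rule ccontr)
  assume "\<not> le a b"
  then have "le b a" using le_total assms by blast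
  then have "le (addE c b) (addE c a)" using le_addl assms by blast
  then have "addE c a = addE c b" using le_antisym assms by auto
  then have "a = b" by (rule addE_cancel)
  then show False using \<open>\<not> le a b\<close> le_refl assms by auto
qed

lemma coef_repr: "is_repr D x n f (coef D x n f)"
  unfolding coef_def using theI'[OF uniq] .
lemma coef_eq: "is_repr D x n f c \<Longrightarrow> coef D x n f = c"
  unfolding coef_def using the1_equality[OF uniq] by blast

lemma coef_D: "coef D x n f a \<in> D" using coef_repr by (simp add: is_repr_def)
lemma coef_out: "a \<notin> Exps n \<Longrightarrow> coef D x n f a = 0" using coef_repr by (simp add: is_repr_def)
lemma supp_fin: "finite (supp D x n f)" using coef_repr by (simp add: is_repr_def supp_def)
lemma supp_Exps: "supp D x n f \<subseteq> Exps n" using coef_out by (auto simp: supp_def)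
lemma coef_sum0: "f = (\<Sum>a\<in>supp D x n f. coef D x n f a * mono x n a)"
  using coef_repr by (simp add: is_repr_def supp_def)

lemma coef_sumS: assumes "finite S" "supp D x n f \<subseteq> S"
  shows "f = (\<Sum>a\<in>S. coef D x n f a * mono x n a)"
proof -
  have "(\<Sum>a\<in>S. coef D x n f a * mono x n a) = (\<Sum>a\<in>supp D x n f. coef D x n f a * mono x n a)"
    by (rule sum.mono_neutral_right) (use assms in \<open>auto simp: supp_def\<close>)
  then show ?thesis using coef_sum0 by simp
qed

lemma is_reprI:
  assumes "\<forall>a. c a \<in> D" "\<forall>a. a \<notin> Exps n \<longrightarrow> c a = 0" "finite S" "{a. c a \<noteq> 0} \<subseteq> S"
    "f = (\<Sum>a\<in>S. c a * mono x n a)"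
  shows "is_repr D x n f c"
proof -
  have "(\<Sum>a\<in>S. c a * mono x n a) = (\<Sum>a\<in>{a. c a \<noteq> 0}. c a * mono x n a)"
    by (rule sum.mono_neutral_right) (use assms in auto)
  then show ?thesis using assms finite_subset unfolding is_repr_def by auto
qed

lemma coef_zero: "coef D x n 0 = (\<lambda>_. 0)"
  by (rule coef_eq, rule is_reprI[where S="{}"]) (auto simp: D0)

lemma coef_add: "coef D x n (f + g) = (\<lambda>a. coef D x n f a + coef D x n g a)"
proof (rule coef_eq, rule is_reprI[where S="supp D x n f \<union> supp D x n g"])
  let ?S = "supp D x n f \<union> supp D x n g"
  have "f = (\<Sum>a\<in>?S. coef D x n f a * mono x n a)" by (rule coef_sumS) (auto simp: supp_fin)
  moreover have "g = (\<Sum>a\<in>?S. coef D x n g a * mono x n a)" by (rule coef_sumS) (auto simp: supp_fin)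
  ultimately show "f + g = (\<Sum>a\<in>?S. (coef D x n f a + coef D x n g a) * mono x n a)"
    by (simp add: sum.distrib distrib_right)
qed (auto simp: Dadd coef_D coef_out supp_fin supp_fin[unfolded supp_def] supp_def)

lemma coef_Dmult: assumes "c \<in> D"
  shows "coef D x n (c * f) = (\<lambda>a. c * coef D x n f a)"
proof (rule coef_eq, rule is_reprI[where S="supp D x n f"])
  show "c * f = (\<Sum>a\<in>supp D x n f. (c * coef D x n f a) * mono x n a)"
    by (subst coef_sum0) (simp add: sum_distrib_left mult.assoc)
qed (auto simp: Dmult assms coef_D coef_out supp_fin supp_fin[unfolded supp_def] supp_def)

lemma coef_uminus: "coef D x n (- f) = (\<lambda>a. - coef D x n f a)"
proof -
  have "- f = (- 1) * f" by simp
  then show ?thesis using coef_Dmult[of "-1" f] Dneg[OF D1] by simp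
qed

lemma coef_diff: "coef D x n (f - g) = (\<lambda>a. coef D x n f a - coef D x n g a)"
  using coef_add[of f "- g"] coef_uminus[of g] by simp

lemma coef_sum: "finite A \<Longrightarrow> coef D x n (\<Sum>k\<in>A. F k) a = (\<Sum>k\<in>A. coef D x n (F k) a)"
  by (induction A rule: finite_induct) (auto simp: coef_zero coef_add)

lemma coef_mono: assumes "b \<in> Exps n"
  shows "coef D x n (mono x n b) = (\<lambda>a. if a = b then 1 else 0)"
  by (rule coef_eq, rule is_reprI[where S="{b}"]) (use assms in \<open>auto simp: D0 D1\<close>)

lemma coef_Del: assumes "c \<in> D"
  shows "coef D x n c = (\<lambda>a. if a = zeroE then c else 0)"
  by (rule coef_eq, rule is_reprI[where S="{zeroE}"]) (use assms in \<open>auto simp: D0 mono_zeroE\<close>)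

lemma supp_nonempty: "f \<noteq> 0 \<Longrightarrow> supp D x n f \<noteq> {}"
  using coef_sum0[of f] by auto

lemma coef_zero_iff: "(\<forall>a. coef D x n f a = 0) \<Longrightarrow> f = 0"
  using supp_nonempty by (auto simp: supp_def)

end

context pbw begin

lemma rexp_props: assumes "f \<noteq> 0"
  shows "rexp D x n le f \<in> supp D x n f \<and> (\<forall>b\<in>supp D x n f. le b (rexp D x n le f))"
proof -
  have E: "supp D x n f \<subseteq> Exps n" by (rule supp_Exps)
  have tr: "\<forall>a\<in>supp D x n f. \<forall>b\<in>supp D x n f. \<forall>c\<in>supp D x n f. le a b \<longrightarrow> le b c \<longrightarrow> le a c"
    using E le_trans by (meson subsetD)
  have tot: "\<forall>a\<in>supp D x n f. \<forall>b\<in>supp D x n f. le a b \<or> le b a"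
    using E le_total by (meson subsetD)
  obtain p where p: "p \<in> supp D x n f" "\<forall>s\<in>supp D x n f. le s p"
    using maxby_ex[OF supp_fin supp_nonempty[OF assms] tr tot] by blast
  have "rexp D x n le f = p" unfolding rexp_def
    by (rule maxby_eq) (use p E le_antisym in blast)+
  then show ?thesis using p by simp
qed

lemma rexp_eq: assumes "p \<in> supp D x n f" "\<forall>b\<in>supp D x n f. le b p"
  shows "rexp D x n le f = p"
  unfolding rexp_def by (rule maxby_eq) (use assms supp_Exps le_antisym in blast)+

lemma rexp_Exps: "f \<noteq> 0 \<Longrightarrow> rexp D x n le f \<in> Exps n"
  using rexp_props supp_Exps by blast

lemma coef_rexp_nz: "f \<noteq> 0 \<Longrightarrow> coef D x n f (rexp D x n le f) \<noteq> 0"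
  using rexp_props by (auto simp: supp_def)

lemma le_rexp: "coef D x n f b \<noteq> 0 \<Longrightarrow> le b (rexp D x n le f)"
proof -
  assume a: "coef D x n f b \<noteq> 0"
  then have "f \<noteq> 0" using coef_zero by auto
  then show ?thesis using rexp_props a by (auto simp: supp_def)
qed

lemma coef_above: assumes "b \<in> Exps n" "le (rexp D x n le f) b" "b \<noteq> rexp D x n le f"
  shows "coef D x n f b = 0"
proof (rule ccontr)
  assume a: "coef D x n f b \<noteq> 0"
  then have "f \<noteq> 0" using coef_zero by auto
  then show False using le_rexp[OF a] assms le_antisym rexp_Exps by blast
qed

lemma mono_nz: assumes "a \<in> Exps n" shows "mono x n a \<noteq> 0"
proof
  have c: "coef D x n (mono x n a) a = 1" using coef_mono[OF assms] by simp
  assume "mono x n a = 0"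
  then show False using c coef_zero one_nz by simp
qed

lemma rexp_mono: assumes "a \<in> Exps n" shows "rexp D x n le (mono x n a) = a"
  by (rule rexp_eq) (auto simp: supp_def coef_mono assms one_nz le_refl)

lemma rexp_Del: assumes "c \<in> D" "c \<noteq> 0" shows "rexp D x n le c = zeroE"
  by (rule rexp_eq) (auto simp: supp_def coef_Del assms le_refl)

lemma rexp_uminus: "rexp D x n le (- f) = rexp D x n le f"
  unfolding rexp_def supp_def coef_uminus by simp

lemma rexp_add_less:
  assumes f: "f \<noteq> 0" and g: "g = 0 \<or> (le (rexp D x n le g) (rexp D x n le f) \<and> rexp D x n le g \<noteq> rexp D x n le f)"
  shows "f + g \<noteq> 0 \<and> rexp D x n le (f + g) = rexp D x n le f"
proof (cases "g = 0")
  case True then show ?thesis using f by simp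
next
  case False
  let ?a = "rexp D x n le f"
  have gl: "le (rexp D x n le g) ?a" "rexp D x n le g \<noteq> ?a" using g False by auto
  have cg: "coef D x n g ?a = 0"
    using coef_above[OF rexp_Exps[OF f] gl(1)] gl(2) by metis
  have cfg: "coef D x n (f + g) ?a \<noteq> 0" using cg coef_rexp_nz[OF f] by (simp add: coef_add)
  have r: "rexp D x n le (f + g) = ?a"
  proof (rule rexp_eq)
    show "?a \<in> supp D x n (f + g)" using cfg by (simp add: supp_def)
    show "\<forall>b\<in>supp D x n (f + g). le b ?a"
    proof
      fix b assume "b \<in> supp D x n (f + g)"
      then have "coef D x n f b \<noteq> 0 \<or> coef D x n g b \<noteq> 0" by (auto simp: supp_def coef_add)
      then show "le b ?a"
      proof
        assume "coef D x n g b \<noteq> 0"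
        then have "le b (rexp D x n le g)" by (rule le_rexp)
        moreover have "b \<in> Exps n" using \<open>coef D x n g b \<noteq> 0\<close> coef_out by blast
        ultimately show ?thesis using gl le_trans rexp_Exps f False by blast
      qed (rule le_rexp)
    qed
  qed
  have "f + g \<noteq> 0" using cfg coef_zero by auto
  then show ?thesis using r by simp
qed

lemma Dmult_nz: "c \<in> D \<Longrightarrow> c \<noteq> 0 \<Longrightarrow> f \<noteq> 0 \<Longrightarrow> c * f \<noteq> 0"
  by (rule prod_nz)

lemma rexp_Dmult: assumes "c \<in> D" "c \<noteq> 0" "f \<noteq> 0"
  shows "rexp D x n le (c * f) = rexp D x n le f"
  using prod_rexp[OF assms(2,3)] rexp_Del[OF assms(1,2)] by simp

lemma qc_D: "qc D x n d a \<in> D" by (simp add: qc_def coef_D)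

lemma qc_nz: assumes "d \<in> Exps n" "a \<in> Exps n" shows "qc D x n d a \<noteq> 0"
proof -
  have "mono x n d * mono x n a \<noteq> 0" using prod_nz mono_nz assms by blast
  moreover have "rexp D x n le (mono x n d * mono x n a) = addE d a"
    using prod_rexp mono_nz rexp_mono assms by simp
  ultimately show ?thesis using coef_rexp_nz unfolding qc_def by metis
qed

lemma LC:
  assumes f: "f \<noteq> 0" and c1: "coef D x n f (rexp D x n le f) = 1" and dE: "d \<in> Exps n"
  shows "coef D x n (mono x n d * f) (addE d (rexp D x n le f)) = qc D x n d (rexp D x n le f)"
proof -
  let ?a = "rexp D x n le f" and ?S = "supp D x n f" and ?c = "coef D x n f"
  have aS: "?a \<in> ?S" and amax: "\<forall>b\<in>?S. le b ?a" using rexp_props[OF f] by auto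
  have aE: "?a \<in> Exps n" using rexp_Exps[OF f] .
  have fin: "finite ?S" by (rule supp_fin)
  have "mono x n d * f = (\<Sum>b\<in>?S. mono x n d * (?c b * mono x n b))"
    by (subst coef_sum0[of f]) (simp add: sum_distrib_left)
  then have "coef D x n (mono x n d * f) (addE d ?a)
      = (\<Sum>b\<in>?S. coef D x n (mono x n d * (?c b * mono x n b)) (addE d ?a))"
    using coef_sum[OF fin] by simp
  also have "\<dots> = coef D x n (mono x n d * (?c ?a * mono x n ?a)) (addE d ?a)
      + (\<Sum>b\<in>?S - {?a}. coef D x n (mono x n d * (?c b * mono x n b)) (addE d ?a))"
    using sum.remove[OF fin aS] by simp
  also have "(\<Sum>b\<in>?S - {?a}. coef D x n (mono x n d * (?c b * mono x n b)) (addE d ?a)) = 0"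
  proof (rule sum.neutral, rule ballI)
    fix b assume b: "b \<in> ?S - {?a}"
    have cb: "?c b \<in> D" "?c b \<noteq> 0" using b coef_D by (auto simp: supp_def)
    have bE: "b \<in> Exps n" using b supp_Exps by blast
    have nz1: "?c b * mono x n b \<noteq> 0" using prod_nz cb mono_nz bE by blast
    have r1: "rexp D x n le (?c b * mono x n b) = b"
      using rexp_Dmult[OF cb mono_nz[OF bE]] rexp_mono[OF bE] by simp
    have nz2: "mono x n d * (?c b * mono x n b) \<noteq> 0" using prod_nz nz1 mono_nz dE by blast
    have r2: "rexp D x n le (mono x n d * (?c b * mono x n b)) = addE d b"
      using prod_rexp[OF mono_nz[OF dE] nz1] r1 rexp_mono[OF dE] by simp
    show "coef D x n (mono x n d * (?c b * mono x n b)) (addE d ?a) = 0"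
    proof (rule ccontr)
      assume "coef D x n (mono x n d * (?c b * mono x n b)) (addE d ?a) \<noteq> 0"
      then have "le (addE d ?a) (addE d b)" using le_rexp[of "mono x n d * (?c b * mono x n b)" "addE d ?a"] r2 by simp
      then have "le ?a b" using le_cancel aE bE dE by blast
      moreover have "le b ?a" using amax b by blast
      ultimately show False using le_antisym aE bE b by blast
    qed
  qed
  finally show ?thesis using c1 by (simp add: qc_def)
qed

end

context pbw begin

lemma TOP_refl: "TOP le p p" by (simp add: TOP_def)
lemma TOP_antisym: assumes "fst p \<in> Exps n" "fst q \<in> Exps n" "TOP le p q" "TOP le q p"
  shows "p = q"
proof (cases "fst p = fst q")
  case True
  then have "snd p \<le> snd q" "snd q \<le> snd p" using assms(3,4) by (auto simp: TOP_def)
  then show ?thesis using True by (simp add: prod_eq_iff)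
next
  case False
  then have "le (fst p) (fst q)" "le (fst q) (fst p)" using assms(3,4) by (auto simp: TOP_def)
  then show ?thesis using le_antisym[OF assms(1,2)] False by blast
qed

lemma TOP_trans: assumes "fst p \<in> Exps n" "fst q \<in> Exps n" "fst r \<in> Exps n"
   "TOP le p q" "TOP le q r" shows "TOP le p r"
proof -
  have t: "le (fst p) (fst q) \<Longrightarrow> le (fst q) (fst r) \<Longrightarrow> le (fst p) (fst r)"
    using le_trans[OF assms(1,2,3)] .
  have a: "le (fst p) (fst q) \<Longrightarrow> le (fst q) (fst p) \<Longrightarrow> fst p = fst q"
    using le_antisym[OF assms(1,2)] .
  show ?thesis using assms(4,5) t a unfolding TOP_def by auto
qed

lemma TOP_total: assumes "fst p \<in> Exps n" "fst q \<in> Exps n" shows "TOP le p q \<or> TOP le q p"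
proof (cases "fst p = fst q")
  case True
  have "snd p \<le> snd q \<or> snd q \<le> snd p" by linarith
  then show ?thesis using True unfolding TOP_def by simp
next
  case False
  then show ?thesis using le_total[OF assms] unfolding TOP_def by simp
qed
lemma TOP_same: "le a b \<Longrightarrow> TOP le (a, l) (b, l)"
  unfolding TOP_def by auto
lemma TOP_add: assumes "fst p \<in> Exps n" "fst q \<in> Exps n" "b \<in> Exps n" "TOP le p q"
  shows "TOP le (addP p b) (addP q b)"
  using assms le_add[of "fst p" "fst q" b] addE_cancel2[of "fst p" b "fst q"]
  unfolding TOP_def addP_def by auto
lemma TOP_add_strict: assumes "fst p \<in> Exps n" "fst q \<in> Exps n" "b \<in> Exps n" "TOP le p q" "p \<noteq> q"
  shows "addP p b \<noteq> addP q b"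
  using assms addE_cancel2[of "fst p" b "fst q"] unfolding addP_def by (auto simp: prod_eq_iff)

definition tord :: "((nat \<Rightarrow> nat) \<times> nat \<Rightarrow> (nat \<Rightarrow> nat) \<times> nat \<Rightarrow> bool) \<Rightarrow> nat \<Rightarrow> bool" where
  "tord ord k \<longleftrightarrow> (\<forall>a\<in>Exps n \<times> {1..k}. \<forall>b\<in>Exps n \<times> {1..k}. \<forall>c\<in>Exps n \<times> {1..k}.
        ord a b \<longrightarrow> ord b c \<longrightarrow> ord a c) \<and>
     (\<forall>a\<in>Exps n \<times> {1..k}. \<forall>b\<in>Exps n \<times> {1..k}. ord a b \<or> ord b a) \<and>
     (\<forall>a\<in>Exps n \<times> {1..k}. \<forall>b\<in>Exps n \<times> {1..k}. ord a b \<longrightarrow> ord b a \<longrightarrow> a = b)"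

lemma tord_TOP: "tord (TOP le) k"
  unfolding tord_def
proof (intro conjI ballI impI)
  fix a b c assume "a \<in> Exps n \<times> {1..k}" "b \<in> Exps n \<times> {1..k}" "c \<in> Exps n \<times> {1..k}"
    "TOP le a b" "TOP le b c"
  then show "TOP le a c" using TOP_trans[of a b c] by auto
next
  fix a b assume "a \<in> Exps n \<times> {1..k}" "b \<in> Exps n \<times> {1..k}"
  then show "TOP le a b \<or> TOP le b a" using TOP_total[of a b] by auto
next
  fix a b assume "a \<in> Exps n \<times> {1..k}" "b \<in> Exps n \<times> {1..k}" "TOP le a b" "TOP le b a"
  then show "a = b" using TOP_antisym[of a b] by auto
qed

lemma vsupp_sub: "vsupp D x n k f \<subseteq> Exps n \<times> {1..k}"
  using coef_out by (auto simp: vsupp_def)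

lemma vsupp_fin: "finite (vsupp D x n k f)"
proof -
  have "vsupp D x n k f \<subseteq> (\<Union>l\<in>{1..k}. supp D x n (f l) \<times> {l})"
    by (auto simp: vsupp_def supp_def)
  moreover have "finite (\<Union>l\<in>{1..k}. supp D x n (f l) \<times> {l})" using supp_fin by auto
  ultimately show ?thesis using finite_subset by blast
qed

lemma vsupp_ne: assumes "f \<in> vecs k" "f \<noteq> (\<lambda>_. 0)" shows "vsupp D x n k f \<noteq> {}"
proof -
  obtain l where l: "f l \<noteq> 0" using assms(2) by auto
  then have "l \<in> {1..k}" using assms(1) by (auto simp: vecs_def)
  moreover obtain a where "a \<in> supp D x n (f l)" using supp_nonempty[OF l] by blast
  ultimately show ?thesis by (auto simp: vsupp_def supp_def)
qed

lemma vexp_props: assumes "tord ord k" "f \<in> vecs k" "f \<noteq> (\<lambda>_. 0)"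
  shows "vexp D x n k ord f \<in> vsupp D x n k f \<and> (\<forall>q\<in>vsupp D x n k f. ord q (vexp D x n k ord f))"
proof -
  let ?S = "vsupp D x n k f"
  have E: "?S \<subseteq> Exps n \<times> {1..k}" by (rule vsupp_sub)
  have tr: "\<forall>a\<in>?S. \<forall>b\<in>?S. \<forall>c\<in>?S. ord a b \<longrightarrow> ord b c \<longrightarrow> ord a c"
    using assms(1) E unfolding tord_def by (meson subsetD)
  have tot: "\<forall>a\<in>?S. \<forall>b\<in>?S. ord a b \<or> ord b a"
    using assms(1) E unfolding tord_def by (meson subsetD)
  have an: "\<forall>a\<in>?S. \<forall>b\<in>?S. ord a b \<longrightarrow> ord b a \<longrightarrow> a = b"
    using assms(1) E unfolding tord_def by (meson subsetD)
  obtain p where p: "p \<in> ?S" "\<forall>s\<in>?S. ord s p"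
    using maxby_ex[OF vsupp_fin vsupp_ne[OF assms(2,3)] tr tot] by blast
  have "vexp D x n k ord f = p" unfolding vexp_def by (rule maxby_eq[OF p an])
  then show ?thesis using p by simp
qed

lemma vexp_eq: assumes "tord ord k" "p \<in> vsupp D x n k f" "\<forall>q\<in>vsupp D x n k f. ord q p"
  shows "vexp D x n k ord f = p"
proof -
  have an: "\<forall>a\<in>vsupp D x n k f. \<forall>b\<in>vsupp D x n k f. ord a b \<longrightarrow> ord b a \<longrightarrow> a = b"
    using assms(1) vsupp_sub unfolding tord_def by (meson subsetD)
  show ?thesis unfolding vexp_def by (rule maxby_eq[OF assms(2,3) an])
qed

end

locale gsys = pbw D x n le
  for D :: "'r::ring_1 set" and x n le +
  fixes m t :: nat and g :: "nat \<Rightarrow> nat \<Rightarrow> 'r"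
  assumes gvec: "\<forall>i\<in>{1..t}. g i \<in> vecs m"
    and gnz: "\<forall>i\<in>{1..t}. g i \<noteq> (\<lambda>_. 0)"
    and lc1: "\<forall>i\<in>{1..t}. lcoef D x n m (TOP le) (g i) = 1"
begin

definition EG where "EG i = vexp D x n m (TOP le) (g i)"
definition al where "al i = fst (EG i)"
definition lv where "lv i = snd (EG i)"

lemma EG_props: assumes "i \<in> {1..t}"
  shows "EG i \<in> vsupp D x n m (g i)" "\<forall>q\<in>vsupp D x n m (g i). TOP le q (EG i)"
  using vexp_props[OF tord_TOP, of "g i" m] gvec gnz assms unfolding EG_def by auto

lemma EG_eq: "i \<in> {1..t} \<Longrightarrow> EG i = (al i, lv i)" by (simp add: al_def lv_def)

lemma al_Exps: "i \<in> {1..t} \<Longrightarrow> al i \<in> Exps n"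
  using EG_props(1) vsupp_sub unfolding al_def by (metis mem_Times_iff subsetD)
lemma lv_range: "i \<in> {1..t} \<Longrightarrow> lv i \<in> {1..m}"
  using EG_props(1) vsupp_sub unfolding lv_def by (metis mem_Times_iff subsetD)

lemma lc_one: "i \<in> {1..t} \<Longrightarrow> coef D x n (g i (lv i)) (al i) = 1"
  using lc1 unfolding lcoef_def al_def lv_def EG_def by auto

lemma glv_nz: "i \<in> {1..t} \<Longrightarrow> g i (lv i) \<noteq> 0"
  using lc_one coef_zero one_nz by force

lemma g_comp: assumes "i \<in> {1..t}" "g i l \<noteq> 0"
  shows "l \<in> {1..m}" "TOP le (rexp D x n le (g i l), l) (al i, lv i)"
proof -
  show l: "l \<in> {1..m}" using gvec assms by (auto simp: vecs_def)
  have "(rexp D x n le (g i l), l) \<in> vsupp D x n m (g i)"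
    using l coef_rexp_nz[OF assms(2)] by (auto simp: vsupp_def)
  then show "TOP le (rexp D x n le (g i l), l) (al i, lv i)"
    using EG_props(2)[OF assms(1)] EG_eq[OF assms(1)] by auto
qed

lemma rexp_glv: assumes "i \<in> {1..t}" shows "rexp D x n le (g i (lv i)) = al i"
proof -
  have "le (al i) (rexp D x n le (g i (lv i)))" using le_rexp lc_one[OF assms] one_nz by simp
  moreover have "TOP le (rexp D x n le (g i (lv i)), lv i) (al i, lv i)"
    using g_comp(2)[OF assms glv_nz[OF assms]] .
  ultimately show ?thesis using le_antisym rexp_Exps glv_nz al_Exps assms
    unfolding TOP_def by auto
qed

end

context gsys begin

definition K :: "(nat \<Rightarrow> nat) \<times> nat \<Rightarrow> (nat \<Rightarrow> nat) \<times> nat" where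
  "K p = addP (EG (snd p)) (fst p)"

lemma ordG_iff: "ordG D x n le m g p q \<longleftrightarrow>
   (TOP le (K p) (K q) \<and> K p \<noteq> K q) \<or> (K p = K q \<and> snd q \<le> snd p)"
  by (simp add: ordG_def K_def EG_def Let_def)

lemma K_simp: "snd p \<in> {1..t} \<Longrightarrow> K p = (addE (al (snd p)) (fst p), lv (snd p))"
  by (simp add: K_def addP_def al_def lv_def)

lemma K_Exps: "p \<in> Exps n \<times> {1..t} \<Longrightarrow> fst (K p) \<in> Exps n"
  using K_simp al_Exps by (auto simp: mem_Times_iff)

lemma K_inj: assumes "p \<in> Exps n \<times> {1..t}" "q \<in> Exps n \<times> {1..t}" "K p = K q" "snd p = snd q"
  shows "p = q"
proof -
  have "addE (al (snd p)) (fst p) = addE (al (snd p)) (fst q)"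
    using assms K_simp[of p] K_simp[of q] by (auto simp: mem_Times_iff)
  then have "fst p = fst q" by (rule addE_cancel)
  then show ?thesis using assms(4) by (simp add: prod_eq_iff)
qed

lemma tord_G: "tord (ordG D x n le m g) t"
  unfolding tord_def
proof (intro conjI ballI impI)
  fix a b c assume d: "a \<in> Exps n \<times> {1..t}" "b \<in> Exps n \<times> {1..t}" "c \<in> Exps n \<times> {1..t}"
    and ab: "ordG D x n le m g a b" and bc: "ordG D x n le m g b c"
  have E: "fst (K a) \<in> Exps n" "fst (K b) \<in> Exps n" "fst (K c) \<in> Exps n" using K_Exps d by auto
  have tr: "TOP le (K a) (K b) \<Longrightarrow> TOP le (K b) (K c) \<Longrightarrow> TOP le (K a) (K c)"
    using TOP_trans[OF E] .
  have an: "TOP le (K a) (K b) \<Longrightarrow> TOP le (K b) (K a) \<Longrightarrow> K a = K b"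
    using TOP_antisym[OF E(1,2)] .
  have an2: "TOP le (K b) (K c) \<Longrightarrow> TOP le (K c) (K b) \<Longrightarrow> K b = K c"
    using TOP_antisym[OF E(2,3)] .
  show "ordG D x n le m g a c"
    using ab bc unfolding ordG_iff
  proof (elim disjE conjE)
    assume "TOP le (K a) (K b)" "K a \<noteq> K b" "TOP le (K b) (K c)" "K b \<noteq> K c"
    then show "TOP le (K a) (K c) \<and> K a \<noteq> K c \<or> K a = K c \<and> snd c \<le> snd a"
      using tr an by metis
  next
    assume "TOP le (K a) (K b)" "K a \<noteq> K b" "K b = K c"
    then show "TOP le (K a) (K c) \<and> K a \<noteq> K c \<or> K a = K c \<and> snd c \<le> snd a" by simp
  next
    assume "K a = K b" "TOP le (K b) (K c)" "K b \<noteq> K c"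
    then show "TOP le (K a) (K c) \<and> K a \<noteq> K c \<or> K a = K c \<and> snd c \<le> snd a" by simp
  next
    assume "K a = K b" "snd b \<le> snd a" "K b = K c" "snd c \<le> snd b"
    then show "TOP le (K a) (K c) \<and> K a \<noteq> K c \<or> K a = K c \<and> snd c \<le> snd a" by simp
  qed
next
  fix a b assume d: "a \<in> Exps n \<times> {1..t}" "b \<in> Exps n \<times> {1..t}"
  have E: "fst (K a) \<in> Exps n" "fst (K b) \<in> Exps n" using K_Exps d by auto
  have "snd a \<le> snd b \<or> snd b \<le> snd a" by linarith
  then show "ordG D x n le m g a b \<or> ordG D x n le m g b a"
    using TOP_total[OF E] unfolding ordG_iff by metis
next
  fix a b assume d: "a \<in> Exps n \<times> {1..t}" "b \<in> Exps n \<times> {1..t}"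
    and ab: "ordG D x n le m g a b" and ba: "ordG D x n le m g b a"
  have E: "fst (K a) \<in> Exps n" "fst (K b) \<in> Exps n" using K_Exps d by auto
  have an: "TOP le (K a) (K b) \<Longrightarrow> TOP le (K b) (K a) \<Longrightarrow> K a = K b"
    using TOP_antisym[OF E(1,2)] .
  have "K a = K b \<and> snd a = snd b" using ab ba unfolding ordG_iff
  proof (elim disjE conjE)
    assume "TOP le (K a) (K b)" "K a \<noteq> K b" "TOP le (K b) (K a)"
    then show ?thesis using an by blast
  next
    assume "K a = K b" "snd b \<le> snd a" "snd a \<le> snd b"
    then show ?thesis by simp
  qed simp_all
  then show "a = b" using K_inj d by blast
qed

lemma ordG_same: assumes "a \<in> Exps n" "b \<in> Exps n" "k \<in> {1..t}" "le a b"
  shows "ordG D x n le m g (a, k) (b, k)"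
proof (cases "a = b")
  case True then show ?thesis unfolding ordG_iff by simp
next
  case False
  have "le (addE (al k) a) (addE (al k) b)" using le_addl assms al_Exps by blast
  moreover have "addE (al k) a \<noteq> addE (al k) b" using False addE_cancel by blast
  ultimately show ?thesis unfolding ordG_iff using K_simp[of "(a,k)"] K_simp[of "(b,k)"] assms(3)
    by (simp add: TOP_def)
qed

lemma K_addP: "snd p \<in> {1..t} \<Longrightarrow> K (addP p b) = addP (K p) b"
  using K_simp[of p] K_simp[of "addP p b"] by (simp add: addP_def addE_assoc)

lemma ordG_add: assumes "p \<in> Exps n \<times> {1..t}" "q \<in> Exps n \<times> {1..t}" "b \<in> Exps n"
    "ordG D x n le m g p q"
  shows "ordG D x n le m g (addP p b) (addP q b)"
proof -
  have E: "fst (K p) \<in> Exps n" "fst (K q) \<in> Exps n" using K_Exps assms by auto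
  have s: "snd p \<in> {1..t}" "snd q \<in> {1..t}" using assms by auto
  have 1: "TOP le (K p) (K q) \<Longrightarrow> TOP le (addP (K p) b) (addP (K q) b)"
    using TOP_add[OF E assms(3)] .
  have 2: "TOP le (K p) (K q) \<Longrightarrow> K p \<noteq> K q \<Longrightarrow> addP (K p) b \<noteq> addP (K q) b"
    using TOP_add_strict[OF E assms(3)] .
  show ?thesis using assms(4) 1 2 unfolding ordG_iff K_addP[OF s(1)] K_addP[OF s(2)]
    by (auto simp: addP_def)
qed

lemma vexpG_char:
  assumes a: "a \<in> vecs t" and i: "i \<in> {1..t}" "a i \<noteq> 0"
    and mx: "\<forall>k\<in>{1..t}. a k \<noteq> 0 \<longrightarrow> ordG D x n le m g (rexp D x n le (a k), k) (rexp D x n le (a i), i)"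
  shows "vexp D x n t (ordG D x n le m g) a = (rexp D x n le (a i), i)"
proof (rule vexp_eq[OF tord_G])
  show "(rexp D x n le (a i), i) \<in> vsupp D x n t a"
    using i coef_rexp_nz by (auto simp: vsupp_def)
  show "\<forall>q\<in>vsupp D x n t a. ordG D x n le m g q (rexp D x n le (a i), i)"
  proof
    fix q assume q: "q \<in> vsupp D x n t a"
    obtain c k where qq: "q = (c, k)" by (cases q)
    have k: "k \<in> {1..t}" and cc: "coef D x n (a k) c \<noteq> 0" using q qq by (auto simp: vsupp_def)
    have akz: "a k \<noteq> 0" using cc coef_zero by auto
    have cE: "c \<in> Exps n" using cc coef_out by blast
    have 1: "ordG D x n le m g (c, k) (rexp D x n le (a k), k)"
      using ordG_same[OF cE rexp_Exps[OF akz] k le_rexp[OF cc]] .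
    have 2: "ordG D x n le m g (rexp D x n le (a k), k) (rexp D x n le (a i), i)"
      using mx k akz by blast
    have "(c, k) \<in> Exps n \<times> {1..t}" "(rexp D x n le (a k), k) \<in> Exps n \<times> {1..t}"
      "(rexp D x n le (a i), i) \<in> Exps n \<times> {1..t}"
      using cE k rexp_Exps akz i by auto
    then show "ordG D x n le m g q (rexp D x n le (a i), i)"
      using tord_G 1 2 qq unfolding tord_def by blast
  qed
qed

end

context gsys begin

definition dd where "dd i j = subE (supE (al i) (al j)) (al i)"
definition SS where "SS i j = supE (al i) (al j)"

lemma rc_eq: "rcoef D x n le m g i j = dinv D (qc D x n (dd i j) (al i)) * mono x n (dd i j)"
  by (simp add: rcoef_def Let_def al_def EG_def dd_def)

lemma dd_Exps: "i \<in> {1..t} \<Longrightarrow> j \<in> {1..t} \<Longrightarrow> dd i j \<in> Exps n"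
  unfolding dd_def using al_Exps by simp
lemma SS_Exps: "i \<in> {1..t} \<Longrightarrow> j \<in> {1..t} \<Longrightarrow> SS i j \<in> Exps n"
  unfolding SS_def using al_Exps by simp
lemma add_dd: "addE (al i) (dd i j) = SS i j"
  by (auto simp: addE_def dd_def SS_def subE_def supE_def fun_eq_iff)
lemma add_dd2: "addE (dd i j) (al i) = SS i j"
  using add_dd addE_commute by metis
lemma SS_comm: "SS j i = SS i j"
  by (auto simp: SS_def supE_def fun_eq_iff)

lemma qinv: assumes "i \<in> {1..t}" "j \<in> {1..t}"
  shows "dinv D (qc D x n (dd i j) (al i)) \<in> D" "dinv D (qc D x n (dd i j) (al i)) \<noteq> 0"
    "dinv D (qc D x n (dd i j) (al i)) * qc D x n (dd i j) (al i) = 1"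
proof -
  have q: "qc D x n (dd i j) (al i) \<in> D" "qc D x n (dd i j) (al i) \<noteq> 0"
    using qc_D qc_nz dd_Exps al_Exps assms by auto
  show "dinv D (qc D x n (dd i j) (al i)) \<in> D" "dinv D (qc D x n (dd i j) (al i)) * qc D x n (dd i j) (al i) = 1"
    using dinv[OF q] by auto
  then show "dinv D (qc D x n (dd i j) (al i)) \<noteq> 0" using one_nz by auto
qed

lemma rc_props: assumes "i \<in> {1..t}" "j \<in> {1..t}"
  shows "rcoef D x n le m g i j \<noteq> 0" "rexp D x n le (rcoef D x n le m g i j) = dd i j"
proof -
  have m: "mono x n (dd i j) \<noteq> 0" using mono_nz dd_Exps assms by blast
  show "rcoef D x n le m g i j \<noteq> 0" unfolding rc_eq using prod_nz qinv assms m by blast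
  show "rexp D x n le (rcoef D x n le m g i j) = dd i j" unfolding rc_eq
    using rexp_Dmult[OF qinv(1,2)[OF assms] m] rexp_mono dd_Exps assms by simp
qed

lemma rc_lead: assumes "i \<in> {1..t}" "j \<in> {1..t}"
  shows "coef D x n (rcoef D x n le m g i j * g i (lv i)) (SS i j) = 1"
proof -
  have c1: "coef D x n (g i (lv i)) (rexp D x n le (g i (lv i))) = 1"
    using lc_one rexp_glv assms by simp
  have L: "coef D x n (mono x n (dd i j) * g i (lv i)) (SS i j) = qc D x n (dd i j) (al i)"
    using LC[OF glv_nz[OF assms(1)] c1 dd_Exps[OF assms]] rexp_glv[OF assms(1)] add_dd2 by simp
  have "rcoef D x n le m g i j * g i (lv i) = dinv D (qc D x n (dd i j) (al i)) * (mono x n (dd i j) * g i (lv i))"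
    unfolding rc_eq by (simp add: mult.assoc)
  then show ?thesis using coef_Dmult[OF qinv(1)[OF assms]] L qinv(3)[OF assms] by simp
qed

lemma rc_bound: assumes "i \<in> {1..t}" "j \<in> {1..t}" "coef D x n (rcoef D x n le m g i j * g i l) c \<noteq> 0"
  shows "TOP le (c, l) (SS i j, lv i)"
proof -
  have pz: "rcoef D x n le m g i j * g i l \<noteq> 0" using assms(3) coef_zero by auto
  then have gz: "g i l \<noteq> 0" by auto
  have r: "rexp D x n le (rcoef D x n le m g i j * g i l) = addE (dd i j) (rexp D x n le (g i l))"
    using prod_rexp[OF rc_props(1)[OF assms(1,2)] gz] rc_props(2)[OF assms(1,2)] by simp
  have cE: "c \<in> Exps n" using assms(3) coef_out by blast
  have gE: "rexp D x n le (g i l) \<in> Exps n" using rexp_Exps[OF gz] .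
  have dE: "dd i j \<in> Exps n" using dd_Exps assms by blast
  have 1: "TOP le (c, l) (addE (rexp D x n le (g i l)) (dd i j), l)"
    using TOP_same le_rexp[OF assms(3)] r addE_commute by metis
  have 2: "TOP le (rexp D x n le (g i l), l) (al i, lv i)" using g_comp(2)[OF assms(1) gz] .
  have 3: "TOP le (addE (rexp D x n le (g i l)) (dd i j), l) (addE (al i) (dd i j), lv i)"
    using TOP_add[OF _ _ dE 2] gE al_Exps[OF assms(1)] by (simp add: addP_def)
  show ?thesis using TOP_trans[OF _ _ _ 1 3] cE gE dE al_Exps[OF assms(1)] add_dd SS_Exps[OF assms(1,2)] by simp
qed

lemma Ip: "(i, j) \<in> Ipairs D x n le m t g \<Longrightarrow> i \<in> {1..t} \<and> j \<in> {1..t} \<and> i < j \<and> lv i = lv j"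
  by (auto simp: Ipairs_def lv_def EG_def)

lemma SP_coef: "coef D x n (SP D x n le m g i j l) c =
   coef D x n (rcoef D x n le m g i j * g i l) c - coef D x n (rcoef D x n le m g j i * g j l) c"
  by (simp add: SP_def coef_diff)

lemma SP_vecs: "i \<in> {1..t} \<Longrightarrow> j \<in> {1..t} \<Longrightarrow> SP D x n le m g i j \<in> vecs m"
  using gvec by (auto simp: vecs_def SP_def)

lemma SP_top: assumes ij: "(i, j) \<in> Ipairs D x n le m t g" and nz: "SP D x n le m g i j \<noteq> (\<lambda>_. 0)"
  shows "TOP le (vexp D x n m (TOP le) (SP D x n le m g i j)) (SS i j, lv i)
     \<and> vexp D x n m (TOP le) (SP D x n le m g i j) \<noteq> (SS i j, lv i)"
proof -
  have I: "i \<in> {1..t}" "j \<in> {1..t}" "lv i = lv j" using Ip[OF ij] by auto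
  let ?E = "vexp D x n m (TOP le) (SP D x n le m g i j)"
  have Ein: "?E \<in> vsupp D x n m (SP D x n le m g i j)"
    using vexp_props[OF tord_TOP SP_vecs[OF I(1,2)] nz] by blast
  obtain c l where cl: "?E = (c, l)" by (cases ?E)
  have cnz: "coef D x n (SP D x n le m g i j l) c \<noteq> 0" using Ein cl by (auto simp: vsupp_def)
  have "TOP le (c, l) (SS i j, lv i)"
  proof (cases "coef D x n (rcoef D x n le m g i j * g i l) c \<noteq> 0")
    case True then show ?thesis using rc_bound I by blast
  next
    case False
    then have "coef D x n (rcoef D x n le m g j i * g j l) c \<noteq> 0" using cnz SP_coef by auto
    then have "TOP le (c, l) (SS j i, lv j)" using rc_bound I by blast
    then show ?thesis using SS_comm I by simp
  qed
  moreover have "coef D x n (SP D x n le m g i j (lv i)) (SS i j) = 0"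
    using SP_coef rc_lead[OF I(1,2)] rc_lead[OF I(2,1)] SS_comm I(3) by simp
  then have "?E \<noteq> (SS i j, lv i)" using cnz cl by auto
  ultimately show ?thesis using cl by simp
qed

end


locale syz = gsys D x n le m t g
  for D :: "'r::ring_1 set" and x n le m t g +
  fixes h :: "nat \<Rightarrow> nat \<Rightarrow> nat \<Rightarrow> 'r"
  assumes hrep: "\<forall>(i, j)\<in>Ipairs D x n le m t g.
        SP D x n le m g i j = (\<lambda>l. \<Sum>k\<in>{1..t}. h i j k * g k l)"
    and hzero: "\<forall>(i, j)\<in>Ipairs D x n le m t g.
        SP D x n le m g i j = (\<lambda>_. 0) \<longrightarrow> (\<forall>k\<in>{1..t}. h i j k = 0)"
    and hmax: "\<forall>(i, j)\<in>Ipairs D x n le m t g.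
        SP D x n le m g i j \<noteq> (\<lambda>_. 0) \<longrightarrow>
          (\<forall>k\<in>{1..t}. h i j k \<noteq> 0 \<longrightarrow>
             TOP le (addP (vexp D x n m (TOP le) (g k)) (rexp D x n le (h i j k)))
                    (vexp D x n m (TOP le) (SP D x n le m g i j))) \<and>
          (\<exists>k\<in>{1..t}. h i j k \<noteq> 0 \<and>
             addP (vexp D x n m (TOP le) (g k)) (rexp D x n le (h i j k))
               = vexp D x n m (TOP le) (SP D x n le m g i j))"
begin

lemma h_SP: "(i, j) \<in> Ipairs D x n le m t g \<Longrightarrow> k \<in> {1..t} \<Longrightarrow> h i j k \<noteq> 0 \<Longrightarrow>
   SP D x n le m g i j \<noteq> (\<lambda>_. 0)"
  using hzero by blast

lemma h_less: assumes ij: "(i, j) \<in> Ipairs D x n le m t g" and k: "k \<in> {1..t}" and hk: "h i j k \<noteq> 0"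
  shows "TOP le (K (rexp D x n le (h i j k), k)) (SS i j, lv i) \<and> K (rexp D x n le (h i j k), k) \<noteq> (SS i j, lv i)"
proof -
  have I: "i \<in> {1..t}" "j \<in> {1..t}" using Ip[OF ij] by auto
  have nz: "SP D x n le m g i j \<noteq> (\<lambda>_. 0)" using h_SP ij k hk .
  let ?E = "vexp D x n m (TOP le) (SP D x n le m g i j)"
  have 1: "TOP le (K (rexp D x n le (h i j k), k)) ?E"
    using hmax ij nz k hk unfolding K_def EG_def by fastforce
  have 2: "TOP le ?E (SS i j, lv i)" "?E \<noteq> (SS i j, lv i)" using SP_top[OF ij nz] by auto
  have E1: "fst (K (rexp D x n le (h i j k), k)) \<in> Exps n" using K_Exps k rexp_Exps[OF hk] by auto
  have E2: "fst ?E \<in> Exps n"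
    using vexp_props[OF tord_TOP SP_vecs[OF I] nz] vsupp_sub by (metis mem_Times_iff subsetD)
  have E3: "fst (SS i j, lv i) \<in> Exps n" using SS_Exps I by simp
  show ?thesis using TOP_trans[OF E1 E2 E3 1 2(1)] TOP_antisym[OF E2 E3 2(1)] 1 2(2)
    by metis
qed

abbreviation "sv i j \<equiv> syzvec D x n le m t g h i j"

lemma sv_i: "i \<noteq> j \<Longrightarrow> i \<in> {1..t} \<Longrightarrow> sv i j i = rcoef D x n le m g i j - h i j i"
  by (simp add: syzvec_def)
lemma sv_j: "i \<noteq> j \<Longrightarrow> j \<in> {1..t} \<Longrightarrow> sv i j j = - rcoef D x n le m g j i - h i j j"
  by (simp add: syzvec_def)
lemma sv_k: "k \<noteq> i \<Longrightarrow> k \<noteq> j \<Longrightarrow> k \<in> {1..t} \<Longrightarrow> sv i j k = - h i j k"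
  by (simp add: syzvec_def)
lemma sv_vecs: "i \<in> {1..t} \<Longrightarrow> j \<in> {1..t} \<Longrightarrow> sv i j \<in> vecs t"
  by (auto simp: syzvec_def vecs_def)

lemma TOP_strict_same: "TOP le (a, l) (b, l) \<Longrightarrow> (a, l) \<noteq> (b, l) \<Longrightarrow> le a b \<and> a \<noteq> b"
  by (auto simp: TOP_def)

lemma sv_i_rexp: assumes ij: "(i, j) \<in> Ipairs D x n le m t g"
  shows "sv i j i \<noteq> 0 \<and> rexp D x n le (sv i j i) = dd i j"
proof -
  have I: "i \<in> {1..t}" "j \<in> {1..t}" "i < j" using Ip[OF ij] by auto
  let ?h = "h i j i"
  have c: "- ?h = 0 \<or> (le (rexp D x n le (- ?h)) (rexp D x n le (rcoef D x n le m g i j))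
         \<and> rexp D x n le (- ?h) \<noteq> rexp D x n le (rcoef D x n le m g i j))"
  proof (cases "?h = 0")
    case True then show ?thesis by simp
  next
    case False
    have "TOP le (K (rexp D x n le ?h, i)) (SS i j, lv i) \<and> K (rexp D x n le ?h, i) \<noteq> (SS i j, lv i)"
      using h_less[OF ij I(1) False] .
    then have "TOP le (addE (al i) (rexp D x n le ?h), lv i) (addE (al i) (dd i j), lv i)
        \<and> (addE (al i) (rexp D x n le ?h), lv i) \<noteq> (addE (al i) (dd i j), lv i)"
      using K_simp[of "(rexp D x n le ?h, i)"] I(1) add_dd by simp
    then have "le (addE (al i) (rexp D x n le ?h)) (addE (al i) (dd i j))"
        "rexp D x n le ?h \<noteq> dd i j"
      using TOP_strict_same by auto
    then have "le (rexp D x n le ?h) (dd i j)" "rexp D x n le ?h \<noteq> dd i j"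
      using le_cancel rexp_Exps[OF False] dd_Exps[OF I(1,2)] al_Exps[OF I(1)] by blast+
    then show ?thesis using rc_props[OF I(1,2)] rexp_uminus by simp
  qed
  have "sv i j i = rcoef D x n le m g i j + - ?h" using sv_i I by simp
  then show ?thesis using rexp_add_less[OF rc_props(1)[OF I(1,2)] c] rc_props(2)[OF I(1,2)] by simp
qed

lemma sv_j_rexp: assumes ij: "(i, j) \<in> Ipairs D x n le m t g"
  shows "sv i j j \<noteq> 0 \<and> rexp D x n le (sv i j j) = dd j i"
proof -
  have I: "i \<in> {1..t}" "j \<in> {1..t}" "i < j" "lv i = lv j" using Ip[OF ij] by auto
  let ?h = "h i j j" and ?r = "- rcoef D x n le m g j i"
  have rnz: "?r \<noteq> 0" using rc_props(1)[OF I(2,1)] by simp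
  have rr: "rexp D x n le ?r = dd j i" using rc_props(2)[OF I(2,1)] rexp_uminus by simp
  have c: "- ?h = 0 \<or> (le (rexp D x n le (- ?h)) (rexp D x n le ?r)
         \<and> rexp D x n le (- ?h) \<noteq> rexp D x n le ?r)"
  proof (cases "?h = 0")
    case True then show ?thesis by simp
  next
    case False
    have "TOP le (K (rexp D x n le ?h, j)) (SS i j, lv i) \<and> K (rexp D x n le ?h, j) \<noteq> (SS i j, lv i)"
      using h_less[OF ij I(2) False] .
    then have "TOP le (addE (al j) (rexp D x n le ?h), lv j) (addE (al j) (dd j i), lv j)
        \<and> (addE (al j) (rexp D x n le ?h), lv j) \<noteq> (addE (al j) (dd j i), lv j)"
      using K_simp[of "(rexp D x n le ?h, j)"] I add_dd[of j i] SS_comm by simp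
    then have "le (addE (al j) (rexp D x n le ?h)) (addE (al j) (dd j i))"
        "rexp D x n le ?h \<noteq> dd j i"
      using TOP_strict_same by auto
    then have "le (rexp D x n le ?h) (dd j i)" "rexp D x n le ?h \<noteq> dd j i"
      using le_cancel rexp_Exps[OF False] dd_Exps[OF I(2,1)] al_Exps[OF I(2)] by blast+
    then show ?thesis using rr rexp_uminus by simp
  qed
  have "sv i j j = ?r + - ?h" using sv_j I by simp
  then show ?thesis using rexp_add_less[OF rnz c] rr by simp
qed

lemma sv_ordG: assumes ij: "(i, j) \<in> Ipairs D x n le m t g" and k: "k \<in> {1..t}" and nz: "sv i j k \<noteq> 0"
  shows "ordG D x n le m g (rexp D x n le (sv i j k), k) (dd i j, i)"
proof -
  have I: "i \<in> {1..t}" "j \<in> {1..t}" "i < j" "lv i = lv j" using Ip[OF ij] by auto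
  have Ki: "K (dd i j, i) = (SS i j, lv i)" using K_simp[of "(dd i j, i)"] I add_dd by simp
  show ?thesis
  proof (cases "k = i")
    case True then show ?thesis using sv_i_rexp[OF ij] unfolding ordG_iff by simp
  next
    case ki: False
    show ?thesis
    proof (cases "k = j")
      case True
      have "K (dd j i, j) = (SS i j, lv i)" using K_simp[of "(dd j i, j)"] I add_dd[of j i] SS_comm by simp
      then show ?thesis using True sv_j_rexp[OF ij] Ki I(3) unfolding ordG_iff by simp
    next
      case False
      have s: "sv i j k = - h i j k" using sv_k ki False k by blast
      then have hk: "h i j k \<noteq> 0" using nz by simp
      have "rexp D x n le (sv i j k) = rexp D x n le (h i j k)" using s rexp_uminus by simp
      then show ?thesis using h_less[OF ij k hk] Ki unfolding ordG_iff by simp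
    qed
  qed
qed

lemma sv_vexp: assumes ij: "(i, j) \<in> Ipairs D x n le m t g"
  shows "vexp D x n t (ordG D x n le m g) (sv i j) = (dd i j, i)"
proof -
  have I: "i \<in> {1..t}" "j \<in> {1..t}" using Ip[OF ij] by auto
  have "vexp D x n t (ordG D x n le m g) (sv i j) = (rexp D x n le (sv i j i), i)"
    by (rule vexpG_char[OF sv_vecs[OF I] I(1)]) (use sv_i_rexp[OF ij] sv_ordG[OF ij] in auto)
  then show ?thesis using sv_i_rexp[OF ij] by simp
qed

end

context syz begin

lemma sv_syz: assumes ij: "(i, j) \<in> Ipairs D x n le m t g"
  shows "sv i j \<in> Syz t g"
proof -
  have I: "i \<in> {1..t}" "j \<in> {1..t}" "i < j" using Ip[OF ij] by auto
  have "(\<Sum>k\<in>{1..t}. sv i j k * g k l) = 0" for l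
  proof -
    have "(\<Sum>k\<in>{1..t}. sv i j k * g k l) = (\<Sum>k\<in>{1..t}. (if k = i then rcoef D x n le m g i j * g k l else 0)
        - (if k = j then rcoef D x n le m g j i * g k l else 0) - h i j k * g k l)"
      by (rule sum.cong) (auto simp: syzvec_def algebra_simps)
    also have "\<dots> = rcoef D x n le m g i j * g i l - rcoef D x n le m g j i * g j l
        - (\<Sum>k\<in>{1..t}. h i j k * g k l)"
      using I by (simp add: sum_subtractf)
    also have "\<dots> = 0"
    proof -
      have "SP D x n le m g i j = (\<lambda>l. \<Sum>k\<in>{1..t}. h i j k * g k l)" using hrep ij by blast
      then have "SP D x n le m g i j l = (\<Sum>k\<in>{1..t}. h i j k * g k l)" by simp
      then show ?thesis by (simp add: SP_def)
    qed
    finally show ?thesis .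
  qed
  then show ?thesis using sv_vecs[OF I(1,2)] by (auto simp: Syz_def)
qed

lemma shift: assumes ij: "(i, j) \<in> Ipairs D x n le m t g" and b: "b \<in> Exps n"
  shows "(\<lambda>k. mono x n b * sv i j k) \<in> Syz t g \<and> (\<lambda>k. mono x n b * sv i j k) \<noteq> (\<lambda>_. 0)
    \<and> vexp D x n t (ordG D x n le m g) (\<lambda>k. mono x n b * sv i j k) = addP (dd i j, i) b"
proof -
  have I: "i \<in> {1..t}" "j \<in> {1..t}" using Ip[OF ij] by auto
  let ?f = "\<lambda>k. mono x n b * sv i j k"
  have mb: "mono x n b \<noteq> 0" using mono_nz b by blast
  have vec: "?f \<in> vecs t" using sv_vecs[OF I] by (auto simp: vecs_def)
  have "(\<Sum>k\<in>{1..t}. ?f k * g k l) = 0" for l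
  proof -
    have "(\<Sum>k\<in>{1..t}. ?f k * g k l) = mono x n b * (\<Sum>k\<in>{1..t}. sv i j k * g k l)"
      by (simp add: sum_distrib_left mult.assoc)
    also have "\<dots> = 0" using sv_syz[OF ij] by (simp add: Syz_def fun_eq_iff)
    finally show ?thesis .
  qed
  then have syz: "?f \<in> Syz t g" using vec by (auto simp: Syz_def)
  have fi: "?f i \<noteq> 0" using prod_nz mb sv_i_rexp[OF ij] by blast
  have rf: "\<And>k. sv i j k \<noteq> 0 \<Longrightarrow> rexp D x n le (?f k) = addE (rexp D x n le (sv i j k)) b"
    using prod_rexp[OF mb] rexp_mono[OF b] addE_commute by metis
  have "vexp D x n t (ordG D x n le m g) ?f = (rexp D x n le (?f i), i)"
  proof (rule vexpG_char[OF vec I(1) fi], intro ballI impI)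
    fix k assume k: "k \<in> {1..t}" and fk: "?f k \<noteq> 0"
    then have sk: "sv i j k \<noteq> 0" by auto
    have o: "ordG D x n le m g (rexp D x n le (sv i j k), k) (dd i j, i)" using sv_ordG[OF ij k sk] .
    have "ordG D x n le m g (addP (rexp D x n le (sv i j k), k) b) (addP (dd i j, i) b)"
      by (rule ordG_add[OF _ _ b o]) (use k I rexp_Exps[OF sk] dd_Exps[OF I] in auto)
    then show "ordG D x n le m g (rexp D x n le (?f k), k) (rexp D x n le (?f i), i)"
      using rf[OF sk] rf sv_i_rexp[OF ij] by (simp add: addP_def)
  qed
  then have "vexp D x n t (ordG D x n le m g) ?f = addP (dd i j, i) b"
    using rf sv_i_rexp[OF ij] by (simp add: addP_def)
  moreover have "?f \<noteq> (\<lambda>_. 0)"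
  proof
    assume "?f = (\<lambda>_. 0)"
    then have "?f i = 0" by (rule fun_cong)
    then show False using fi by simp
  qed
  ultimately show ?thesis using syz by blast
qed

end

context syz begin

lemma dd_split: assumes "addE (al j) rj = addE (al i) ri"
  shows "addE (dd i j) (subE ri (dd i j)) = ri"
  unfolding fun_eq_iff
proof
  fix z
  have e: "al j z + rj z = al i z + ri z" using assms by (auto simp: addE_def fun_eq_iff)
  have l: "max (al i z) (al j z) - al i z \<le> ri z" using e unfolding max_def by arith
  have "addE (dd i j) (subE ri (dd i j)) z = (max (al i z) (al j z) - al i z) + (ri z - (max (al i z) (al j z) - al i z))"
    by (simp add: addE_def subE_def dd_def supE_def)
  also have "\<dots> = ri z" using l by simp
  finally show "addE (dd i j) (subE ri (dd i j)) z = ri z" .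
qed

lemma syz_exp: assumes aS: "a \<in> Syz t g" and anz: "a \<noteq> (\<lambda>_. 0)"
  shows "\<exists>i j b. (i, j) \<in> Ipairs D x n le m t g \<and> b \<in> Exps n \<and>
      vexp D x n t (ordG D x n le m g) a = addP (dd i j, i) b"
proof -
  have av: "a \<in> vecs t" and asum: "\<And>l. (\<Sum>k\<in>{1..t}. a k * g k l) = 0"
    using aS by (auto simp: Syz_def fun_eq_iff)
  let ?T = "(\<lambda>k. (rexp D x n le (a k), k)) ` {k\<in>{1..t}. a k \<noteq> 0}"
  obtain k0 where "a k0 \<noteq> 0" using anz by auto
  then have k0: "k0 \<in> {1..t}" "a k0 \<noteq> 0" using av by (auto simp: vecs_def)
  have Tne: "?T \<noteq> {}" using k0 by auto
  have Tfin: "finite ?T" by simp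
  have Tsub: "?T \<subseteq> Exps n \<times> {1..t}" using rexp_Exps by auto
  have tr: "\<forall>a\<in>?T. \<forall>b\<in>?T. \<forall>c\<in>?T. ordG D x n le m g a b \<longrightarrow> ordG D x n le m g b c \<longrightarrow> ordG D x n le m g a c"
    using tord_G Tsub unfolding tord_def by (meson subsetD)
  have tot: "\<forall>a\<in>?T. \<forall>b\<in>?T. ordG D x n le m g a b \<or> ordG D x n le m g b a"
    using tord_G Tsub unfolding tord_def by (meson subsetD)
  obtain p where p: "p \<in> ?T" "\<forall>s\<in>?T. ordG D x n le m g s p"
    using maxby_ex[OF Tfin Tne tr tot] by blast
  obtain i where i: "i \<in> {1..t}" "a i \<noteq> 0" and pi: "p = (rexp D x n le (a i), i)" using p(1) by auto
  have mx: "\<forall>k\<in>{1..t}. a k \<noteq> 0 \<longrightarrow> ordG D x n le m g (rexp D x n le (a k), k) p" using p(2) by auto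
  have ve: "vexp D x n t (ordG D x n le m g) a = p"
    using vexpG_char[OF av i] mx pi by simp
  let ?L = "lv i" and ?c = "addE (al i) (rexp D x n le (a i))"
  have Kp: "K p = (?c, ?L)" using K_simp[of p] pi i by simp
  have aiE: "rexp D x n le (a i) \<in> Exps n" using rexp_Exps i by blast
  have pE: "fst (K p) \<in> Exps n" using Kp al_Exps[OF i(1)] aiE by simp
  have "\<exists>j\<in>{1..t}. j \<noteq> i \<and> a j \<noteq> 0 \<and> K (rexp D x n le (a j), j) = K p"
  proof (rule ccontr)
    assume nc: "\<not> ?thesis"
    have z: "coef D x n (a k * g k ?L) ?c = 0" if k: "k \<in> {1..t} - {i}" for k
    proof (rule ccontr)
      assume cz: "coef D x n (a k * g k ?L) ?c \<noteq> 0"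
      then have pz: "a k * g k ?L \<noteq> 0" using coef_zero by auto
      then have akz: "a k \<noteq> 0" and gkz: "g k ?L \<noteq> 0" by auto
      have kk: "k \<in> {1..t}" using k by simp
      have akE: "rexp D x n le (a k) \<in> Exps n" using rexp_Exps akz by blast
      have gE: "rexp D x n le (g k ?L) \<in> Exps n" using rexp_Exps gkz by blast
      have r: "rexp D x n le (a k * g k ?L) = addE (rexp D x n le (g k ?L)) (rexp D x n le (a k))"
        using prod_rexp[OF akz gkz] addE_commute by metis
      have 1: "TOP le (?c, ?L) (addE (rexp D x n le (g k ?L)) (rexp D x n le (a k)), ?L)"
        using TOP_same le_rexp[OF cz] r by metis
      have 2: "TOP le (rexp D x n le (g k ?L), ?L) (al k, lv k)" using g_comp(2)[OF kk gkz] .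
      have 3: "TOP le (addE (rexp D x n le (g k ?L)) (rexp D x n le (a k)), ?L) (K (rexp D x n le (a k), k))"
        using TOP_add[OF _ _ akE 2] gE al_Exps[OF kk] K_simp[of "(rexp D x n le (a k), k)"] kk
        by (simp add: addP_def)
      have KkE: "fst (K (rexp D x n le (a k), k)) \<in> Exps n" using K_Exps kk akE by auto
      have 4: "TOP le (K p) (K (rexp D x n le (a k), k))"
        using TOP_trans[OF _ _ KkE 1 3] Kp pE gE akE by simp
      have "ordG D x n le m g (rexp D x n le (a k), k) p" using mx kk akz by blast
      then have 5: "TOP le (K (rexp D x n le (a k), k)) (K p)"
        unfolding ordG_iff using TOP_refl by metis
      have "K (rexp D x n le (a k), k) = K p" using TOP_antisym[OF KkE pE 5 4] .
      then show False using nc kk k akz by blast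
    qed
    have pi_nz: "a i * g i ?L \<noteq> 0" using prod_nz i glv_nz by blast
    have ri: "rexp D x n le (a i * g i ?L) = ?c"
      using prod_rexp[OF i(2) glv_nz[OF i(1)]] rexp_glv[OF i(1)] addE_commute by metis
    have ci: "coef D x n (a i * g i ?L) ?c \<noteq> 0" using coef_rexp_nz[OF pi_nz] ri by simp
    have "coef D x n (\<Sum>k\<in>{1..t}. a k * g k ?L) ?c = (\<Sum>k\<in>{1..t}. coef D x n (a k * g k ?L) ?c)"
      by (rule coef_sum) simp
    also have "\<dots> = coef D x n (a i * g i ?L) ?c + (\<Sum>k\<in>{1..t} - {i}. coef D x n (a k * g k ?L) ?c)"
      using sum.remove[of "{1..t}" i] i(1) by simp
    also have "\<dots> = coef D x n (a i * g i ?L) ?c" using z by simp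
    finally have "coef D x n 0 ?c \<noteq> 0" using asum ci by simp
    then show False using coef_zero by simp
  qed
  then obtain j where j: "j \<in> {1..t}" "j \<noteq> i" "a j \<noteq> 0" and Kj: "K (rexp D x n le (a j), j) = K p"
    by blast
  have "ordG D x n le m g (rexp D x n le (a j), j) p" using mx j by blast
  then have "i \<le> j" using Kj pi unfolding ordG_iff by auto
  then have ij_lt: "i < j" using j(2) by simp
  have Kj2: "K (rexp D x n le (a j), j) = (addE (al j) (rexp D x n le (a j)), lv j)"
    using K_simp[of "(rexp D x n le (a j), j)"] j by simp
  have lvij: "lv i = lv j" and eqc: "addE (al j) (rexp D x n le (a j)) = addE (al i) (rexp D x n le (a i))"
    using Kj Kj2 Kp by auto
  have Ipij: "(i, j) \<in> Ipairs D x n le m t g"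
    using i(1) j(1) ij_lt lvij unfolding Ipairs_def lv_def EG_def by auto
  let ?b = "subE (rexp D x n le (a i)) (dd i j)"
  have "addE (dd i j) ?b = rexp D x n le (a i)" using dd_split[OF eqc] .
  then have "vexp D x n t (ordG D x n le m g) a = addP (dd i j, i) ?b"
    using ve pi by (simp add: addP_def)
  moreover have "?b \<in> Exps n" using aiE by simp
  ultimately show ?thesis using Ipij by blast
qed

lemma GB_syz: "is_GB D x n t (ordG D x n le m g)
           {syzvec D x n le m t g h i j | i j. (i, j) \<in> Ipairs D x n le m t g}
           (Syz t g)"
proof -
  let ?G = "{syzvec D x n le m t g h i j | i j. (i, j) \<in> Ipairs D x n le m t g}"
  have "?G = (\<lambda>(i, j). sv i j) ` Ipairs D x n le m t g" by auto
  moreover have "Ipairs D x n le m t g \<subseteq> {1..t} \<times> {1..t}" using Ip by auto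
  moreover have "finite ({1..t} \<times> {1..t::nat})" by simp
  ultimately have fin: "finite ?G" using finite_subset[of "Ipairs D x n le m t g"] by (metis finite_imageI)
  have sub: "?G \<subseteq> Syz t g" using sv_syz by auto
  have nz: "(\<lambda>_. 0) \<notin> ?G"
  proof
    assume "(\<lambda>_. 0) \<in> ?G"
    then obtain i j where ij: "(i, j) \<in> Ipairs D x n le m t g" "sv i j = (\<lambda>_. 0)" by auto
    then have "sv i j i = 0" by simp
    then show False using sv_i_rexp[OF ij(1)] by simp
  qed
  have eq: "{vexp D x n t (ordG D x n le m g) f | f. f \<in> Syz t g \<and> f \<noteq> (\<lambda>_. 0)}
       = (\<Union>s\<in>?G. {addP (vexp D x n t (ordG D x n le m g) s) b | b. b \<in> Exps n})"
  proof (rule set_eqI, rule iffI)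
    fix e assume "e \<in> {vexp D x n t (ordG D x n le m g) f | f. f \<in> Syz t g \<and> f \<noteq> (\<lambda>_. 0)}"
    then obtain f where f: "f \<in> Syz t g" "f \<noteq> (\<lambda>_. 0)" "e = vexp D x n t (ordG D x n le m g) f" by blast
    obtain i j b where ijb: "(i, j) \<in> Ipairs D x n le m t g" "b \<in> Exps n"
      "vexp D x n t (ordG D x n le m g) f = addP (dd i j, i) b"
      using syz_exp[OF f(1,2)] by blast
    have "e = addP (vexp D x n t (ordG D x n le m g) (sv i j)) b" using f(3) ijb(3) sv_vexp[OF ijb(1)] by simp
    then show "e \<in> (\<Union>s\<in>?G. {addP (vexp D x n t (ordG D x n le m g) s) b | b. b \<in> Exps n})"
      using ijb(1,2) by blast
  next
    fix e assume "e \<in> (\<Union>s\<in>?G. {addP (vexp D x n t (ordG D x n le m g) s) b | b. b \<in> Exps n})"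
    then obtain i j b where ijb: "(i, j) \<in> Ipairs D x n le m t g" "b \<in> Exps n"
      "e = addP (vexp D x n t (ordG D x n le m g) (sv i j)) b" by blast
    let ?f = "\<lambda>k. mono x n b * sv i j k"
    have "e = addP (dd i j, i) b" using ijb(3) sv_vexp[OF ijb(1)] by simp
    then have "e = vexp D x n t (ordG D x n le m g) ?f \<and> ?f \<in> Syz t g \<and> ?f \<noteq> (\<lambda>_. 0)"
      using shift[OF ijb(1,2)] by simp
    then show "e \<in> {vexp D x n t (ordG D x n le m g) f | f. f \<in> Syz t g \<and> f \<noteq> (\<lambda>_. 0)}"
      by blast
  qed
  show ?thesis unfolding is_GB_def using fin sub nz eq by blast
qed

end

theorem mainTheorem18:
  fixes D :: "'r::ring_1 set" and x :: "nat \<Rightarrow> 'r" and n :: nat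
    and le :: "(nat \<Rightarrow> nat) \<Rightarrow> (nat \<Rightarrow> nat) \<Rightarrow> bool"
    and m t :: nat and g :: "nat \<Rightarrow> nat \<Rightarrow> 'r" and h :: "nat \<Rightarrow> nat \<Rightarrow> nat \<Rightarrow> 'r"
  assumes PBW: "left_PBW D x n le"
    and gvec: "\<forall>i\<in>{1..t}. g i \<in> vecs m"
    and ginj: "inj_on g {1..t}"
    and GB: "is_GB D x n m (TOP le) (g ` {1..t}) (submod t g)"
    and lc1: "\<forall>i\<in>{1..t}. lcoef D x n m (TOP le) (g i) = 1"
    and hrep: "\<forall>(i, j)\<in>Ipairs D x n le m t g.
        SP D x n le m g i j = (\<lambda>l. \<Sum>k\<in>{1..t}. h i j k * g k l)"
    and hzero: "\<forall>(i, j)\<in>Ipairs D x n le m t g.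
        SP D x n le m g i j = (\<lambda>_. 0) \<longrightarrow> (\<forall>k\<in>{1..t}. h i j k = 0)"
    and hmax: "\<forall>(i, j)\<in>Ipairs D x n le m t g.
        SP D x n le m g i j \<noteq> (\<lambda>_. 0) \<longrightarrow>
          (\<forall>k\<in>{1..t}. h i j k \<noteq> 0 \<longrightarrow>
             TOP le (addP (vexp D x n m (TOP le) (g k)) (rexp D x n le (h i j k)))
                    (vexp D x n m (TOP le) (SP D x n le m g i j))) \<and>
          (\<exists>k\<in>{1..t}. h i j k \<noteq> 0 \<and>
             addP (vexp D x n m (TOP le) (g k)) (rexp D x n le (h i j k))
               = vexp D x n m (TOP le) (SP D x n le m g i j))"
  shows "is_GB D x n t (ordG D x n le m g)
           {syzvec D x n le m t g h i j | i j. (i, j) \<in> Ipairs D x n le m t g}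
           (Syz t g)"
proof -
  have gnz: "\<forall>i\<in>{1..t}. g i \<noteq> (\<lambda>_. 0)" using GB unfolding is_GB_def by force
  interpret S: syz D x n le m t g h
    by unfold_locales (fact PBW gvec gnz lc1 hrep hzero hmax)+
  show ?thesis by (rule S.GB_syz)
qed

end
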